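(* Over any commutative ring $R$, the $\mathcal S$-complex $\widetilde{\mathcal O}(1)\otimes\widetilde{\mathcal O}(-1)$ is $\mathcal S$-chain homotopy equivalent to $\widetilde{\mathcal O}(0)$.
   Context: Graded modules are $\mathbb Z$-graded; $V[i]_j=V_{i+j}$; differentials have degree $-1$; $\epsilon$ is the sign map ($(-1)^i$ on degree $i$). An $\mathcal S$-complex over $R$ is a chain complex $(\widetilde C,\widetilde d)$ of finitely generated free graded $R$-modules with a graded decomposition $\widetilde C=C\oplus C[-1]\oplus\mathsf R$ in which $\widetilde d=\begin{pmatrix} d&0&0\\ v&-d&\delta_2\\ \delta_1&0&r\end{pmatrix}$; $\chi$ denotes the degree $1$ map sending $C$ identically onto $C[-1]$ and zero on $C[-1]\oplus\mathsf R$. A morphism is a degree $0$ chain map commuting with the $\chi$'s; an $\mathcal S$-chain homotopy between morphisms is a degree $1$ map $\widetilde K$ with $\chi'\widetilde K+\widetilde K\chi=0$ and $\widetilde d'\widetilde K+\widetilde K\widetilde d$ equal to their difference; an $\mathcal S$-chain homotopy equivalence is a pair of morphisms whose composites are $\mathcal S$-chain homotopic to identities. The tensor product of $\mathcal S$-complexes is the tensor product chain complex (differential $\widetilde d\otimes 1+\epsilon\otimes\widetilde d'$) with $\chi^\otimes=\chi\otimes1+\epsilon\otimes\chi'$. $\widetilde{\mathcal O}(1)$: $C=R$ in degree $1$, $\mathsf R=R$ in degree $0$, $d=v=\delta_2=r=0$, $\delta_1=\mathrm{id}_R$. $\widetilde{\mathcal O}(-1)$: $C=R$ in degree $-2$,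 $\mathsf R=R$ in degree $0$, $d=v=\delta_1=r=0$, $\delta_2=\mathrm{id}_R$. $\widetilde{\mathcal O}(0)$: $C=0$, $\mathsf R=R$ in degree $0$, zero differential. *)

theory Defs
  imports Main
begin

text \<open>
  Finitely generated free graded R-modules are represented by a finite basis
  (a set of basis elements of some type) together with a degree function.
  A graded R-linear map between such modules is represented by its matrix
  m :: target basis => source basis => R  (m y x = coefficient of y in the image of x).
\<close>

record ('b, 'r) cx =
  bas :: "'b set"
  deg :: "'b \<Rightarrow> int"
  dif :: "'b \<Rightarrow> 'b \<Rightarrow> 'r"
  chi :: "'b \<Rightarrow> 'b \<Rightarrow> 'r"

definition mmul :: "'b set \<Rightarrow> ('c \<Rightarrow> 'b \<Rightarrow> 'r::comm_ring_1) \<Rightarrow> ('b \<Rightarrow> 'a \<Rightarrow> 'r) \<Rightarrow> 'c \<Rightarrow> 'a \<Rightarrow> 'r" where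
  "mmul S g f = (\<lambda>z x. \<Sum>y\<in>S. g z y * f y x)"

definition idm :: "('b, 'r::comm_ring_1, 'z) cx_scheme \<Rightarrow> 'b \<Rightarrow> 'b \<Rightarrow> 'r" where
  "idm A = (\<lambda>y x. if y = x \<and> x \<in> bas A then 1 else 0)"

definition gmap :: "('b, 'r::comm_ring_1, 'z) cx_scheme \<Rightarrow> ('c, 'r, 'w) cx_scheme \<Rightarrow> int
    \<Rightarrow> ('c \<Rightarrow> 'b \<Rightarrow> 'r) \<Rightarrow> bool" where
  "gmap A B k f \<longleftrightarrow> (\<forall>y x. f y x \<noteq> 0 \<longrightarrow> x \<in> bas A \<and> y \<in> bas B \<and> deg B y = deg A x + k)"

definition s_morphism :: "('b, 'r::comm_ring_1) cx \<Rightarrow> ('c, 'r) cx \<Rightarrow> ('c \<Rightarrow> 'b \<Rightarrow> 'r) \<Rightarrow> bool" where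
  "s_morphism A B f \<longleftrightarrow> gmap A B 0 f
     \<and> mmul (bas B) (dif B) f = mmul (bas A) f (dif A)
     \<and> mmul (bas B) (chi B) f = mmul (bas A) f (chi A)"

definition s_homotopic :: "('b, 'r::comm_ring_1) cx \<Rightarrow> ('c, 'r) cx
    \<Rightarrow> ('c \<Rightarrow> 'b \<Rightarrow> 'r) \<Rightarrow> ('c \<Rightarrow> 'b \<Rightarrow> 'r) \<Rightarrow> bool" where
  "s_homotopic A B f g \<longleftrightarrow> (\<exists>K. gmap A B 1 K
     \<and> (\<forall>y x. mmul (bas B) (chi B) K y x + mmul (bas A) K (chi A) y x = 0)
     \<and> (\<forall>y x. mmul (bas B) (dif B) K y x + mmul (bas A) K (dif A) y x = f y x - g y x))"

definition s_heq :: "('b, 'r::comm_ring_1) cx \<Rightarrow> ('c, 'r) cx \<Rightarrow> bool" where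
  "s_heq A B \<longleftrightarrow> (\<exists>f g. s_morphism A B f \<and> s_morphism B A g
     \<and> s_homotopic A A (mmul (bas B) g f) (idm A)
     \<and> s_homotopic B B (mmul (bas A) f g) (idm B))"

text \<open>S-complexes: basis of C~ = C + C[-1] + R\<close>
datatype ('c, 'e) sb = SC 'c | SCs 'c | SR 'e

definition sdeg :: "('c \<Rightarrow> int) \<Rightarrow> ('e \<Rightarrow> int) \<Rightarrow> ('c, 'e) sb \<Rightarrow> int" where
  "sdeg dC dR b = (case b of SC x \<Rightarrow> dC x | SCs x \<Rightarrow> dC x + 1 | SR e \<Rightarrow> dR e)"

fun sdif0 :: "('c \<Rightarrow> 'c \<Rightarrow> 'r::comm_ring_1) \<Rightarrow> ('c \<Rightarrow> 'c \<Rightarrow> 'r) \<Rightarrow> ('e \<Rightarrow> 'c \<Rightarrow> 'r)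
    \<Rightarrow> ('c \<Rightarrow> 'e \<Rightarrow> 'r) \<Rightarrow> ('e \<Rightarrow> 'e \<Rightarrow> 'r) \<Rightarrow> ('c, 'e) sb \<Rightarrow> ('c, 'e) sb \<Rightarrow> 'r" where
  "sdif0 d v d1 d2 r (SC y) (SC x) = d y x"
| "sdif0 d v d1 d2 r (SCs y) (SC x) = v y x"
| "sdif0 d v d1 d2 r (SR y) (SC x) = d1 y x"
| "sdif0 d v d1 d2 r (SCs y) (SCs x) = - d y x"
| "sdif0 d v d1 d2 r (SCs y) (SR x) = d2 y x"
| "sdif0 d v d1 d2 r (SR y) (SR x) = r y x"
| "sdif0 d v d1 d2 r _ _ = 0"

fun schi0 :: "('c, 'e) sb \<Rightarrow> ('c, 'e) sb \<Rightarrow> 'r::comm_ring_1" where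
  "schi0 (SCs y) (SC x) = (if y = x then 1 else 0)"
| "schi0 _ _ = 0"

definition scx :: "'c set \<Rightarrow> ('c \<Rightarrow> int) \<Rightarrow> 'e set \<Rightarrow> ('e \<Rightarrow> int)
    \<Rightarrow> ('c \<Rightarrow> 'c \<Rightarrow> 'r::comm_ring_1) \<Rightarrow> ('c \<Rightarrow> 'c \<Rightarrow> 'r) \<Rightarrow> ('e \<Rightarrow> 'c \<Rightarrow> 'r)
    \<Rightarrow> ('c \<Rightarrow> 'e \<Rightarrow> 'r) \<Rightarrow> ('e \<Rightarrow> 'e \<Rightarrow> 'r) \<Rightarrow> (('c, 'e) sb, 'r) cx" where
  "scx BC dC BR dR d v d1 d2 r =
     (let B = SC ` BC \<union> SCs ` BC \<union> SR ` BR in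
      \<lparr> bas = B, deg = sdeg dC dR,
        dif = (\<lambda>y x. if y \<in> B \<and> x \<in> B then sdif0 d v d1 d2 r y x else 0),
        chi = (\<lambda>y x. if y \<in> B \<and> x \<in> B then schi0 y x else 0) \<rparr>)"

definition epsn :: "int \<Rightarrow> 'r::comm_ring_1" where
  "epsn i = (if even i then 1 else -1)"

text \<open>tensor product: differential d\<otimes>1 + eps\<otimes>d', chi\<otimes>1 + eps\<otimes>chi'\<close>
definition tensor :: "('b, 'r::comm_ring_1) cx \<Rightarrow> ('c, 'r) cx \<Rightarrow> ('b \<times> 'c, 'r) cx" where
  "tensor A B =
     (let S = bas A \<times> bas B;
          t = (\<lambda>mA mB (y', z') (y, z). if (y', z') \<in> S \<and> (y, z) \<in> S then
                 (if z' = z then mA y' y else 0) + (if y' = y then epsn (deg A y) * mB z' z else 0)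
               else 0)
      in \<lparr> bas = S, deg = (\<lambda>(y, z). deg A y + deg B z),
           dif = t (dif A) (dif B), chi = t (chi A) (chi B) \<rparr>)"

definition O_pos :: "((unit, unit) sb, 'r::comm_ring_1) cx" where
  "O_pos = scx {()} (\<lambda>_. 1) {()} (\<lambda>_. 0) (\<lambda>_ _. 0) (\<lambda>_ _. 0) (\<lambda>_ _. 1) (\<lambda>_ _. 0) (\<lambda>_ _. 0)"

definition O_neg :: "((unit, unit) sb, 'r::comm_ring_1) cx" where
  "O_neg = scx {()} (\<lambda>_. -2) {()} (\<lambda>_. 0) (\<lambda>_ _. 0) (\<lambda>_ _. 0) (\<lambda>_ _. 0) (\<lambda>_ _. 1) (\<lambda>_ _. 0)"

definition O_zero :: "((unit, unit) sb, 'r::comm_ring_1) cx" where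
  "O_zero = scx {} (\<lambda>_. 0) {()} (\<lambda>_. 0) (\<lambda>_ _. 0) (\<lambda>_ _. 0) (\<lambda>_ _. 0) (\<lambda>_ _. 0) (\<lambda>_ _. 0)"

end

theory Submission
  imports Defs
begin
type_synonym ub = "(unit, unit) sb"

lemma all_ub: "(\<forall>x::ub. P x) = (P (SC ()) \<and> P (SCs ()) \<and> P (SR ()))"
  by (metis (full_types) old.unit.exhaust sb.exhaust)

lemma ub_univ: "(UNIV :: ub set) = {SC (), SCs (), SR ()}"
  using all_ub[of "\<lambda>x. x \<in> {SC (), SCs (), SR ()}"] by auto

lemma basP: "bas (O_pos :: (ub, 'r::comm_ring_1) cx) = UNIV"
  by (auto simp: O_pos_def scx_def ub_univ)
lemma basN: "bas (O_neg :: (ub, 'r::comm_ring_1) cx) = UNIV"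
  by (auto simp: O_neg_def scx_def ub_univ)

lemma difP: "dif (O_pos :: (ub, 'r::comm_ring_1) cx) = (\<lambda>y x. if y = SR () \<and> x = SC () then 1 else 0)"
  unfolding fun_eq_iff all_ub by (simp add: O_pos_def scx_def)
lemma chiP: "chi (O_pos :: (ub, 'r::comm_ring_1) cx) = (\<lambda>y x. if y = SCs () \<and> x = SC () then 1 else 0)"
  unfolding fun_eq_iff all_ub by (simp add: O_pos_def scx_def)
lemma difN: "dif (O_neg :: (ub, 'r::comm_ring_1) cx) = (\<lambda>y x. if y = SCs () \<and> x = SR () then 1 else 0)"
  unfolding fun_eq_iff all_ub by (simp add: O_neg_def scx_def)
lemma chiN: "chi (O_neg :: (ub, 'r::comm_ring_1) cx) = (\<lambda>y x. if y = SCs () \<and> x = SC () then 1 else 0)"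
  unfolding fun_eq_iff all_ub by (simp add: O_neg_def scx_def)
lemma degP: "deg (O_pos :: (ub, 'r::comm_ring_1) cx) y = sdeg (\<lambda>_. 1) (\<lambda>_. 0) y"
  by (simp add: O_pos_def scx_def)
lemma degN: "deg (O_neg :: (ub, 'r::comm_ring_1) cx) y = sdeg (\<lambda>_. -2) (\<lambda>_. 0) y"
  by (simp add: O_neg_def scx_def)

lemma basT: "bas (tensor (O_pos :: (ub, 'r::comm_ring_1) cx) O_neg) = UNIV"
  by (simp add: tensor_def basP basN)
lemma degT: "deg (tensor (O_pos :: (ub, 'r::comm_ring_1) cx) O_neg) = (\<lambda>(y,z). sdeg (\<lambda>_. 1) (\<lambda>_. 0) y + sdeg (\<lambda>_. -2) (\<lambda>_. 0) z)"
  by (simp add: tensor_def degP degN)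
lemma difT: "dif (tensor (O_pos :: (ub, 'r::comm_ring_1) cx) O_neg) = (\<lambda>(y',z') (y,z).
   (if z' = z then (if y' = SR () \<and> y = SC () then 1 else 0) else 0) +
   (if y' = y then epsn (sdeg (\<lambda>_. 1) (\<lambda>_. 0) y) * (if z' = SCs () \<and> z = SR () then 1 else 0) else 0))"
  by (simp add: tensor_def basP basN difP difN degP cong: if_cong)
lemma chiT: "chi (tensor (O_pos :: (ub, 'r::comm_ring_1) cx) O_neg) = (\<lambda>(y',z') (y,z).
   (if z' = z then (if y' = SCs () \<and> y = SC () then 1 else 0) else 0) +
   (if y' = y then epsn (sdeg (\<lambda>_. 1) (\<lambda>_. 0) y) * (if z' = SCs () \<and> z = SC () then 1 else 0) else 0))"
  by (simp add: tensor_def basP basN chiP chiN degP cong: if_cong)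

lemma basZ: "bas (O_zero :: (ub, 'r::comm_ring_1) cx) = {SR ()}"
  by (simp add: O_zero_def scx_def)
lemma difZ: "dif (O_zero :: (ub, 'r::comm_ring_1) cx) = (\<lambda>_ _. 0)"
  unfolding fun_eq_iff all_ub by (simp add: O_zero_def scx_def)
lemma chiZ: "chi (O_zero :: (ub, 'r::comm_ring_1) cx) = (\<lambda>_ _. 0)"
  unfolding fun_eq_iff all_ub by (simp add: O_zero_def scx_def)
lemma degZ: "deg (O_zero :: (ub, 'r::comm_ring_1) cx) = sdeg (\<lambda>_. 0) (\<lambda>_. 0)"
  by (simp add: O_zero_def scx_def)

definition fM :: "ub \<Rightarrow> ub \<times> ub \<Rightarrow> 'r::comm_ring_1" where
  "fM y x = (if y = SR () \<and> x \<in> {(SC (), SCs ()), (SCs (), SC ()), (SR (), SR ())} then 1 else 0)"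

definition gM :: "ub \<times> ub \<Rightarrow> ub \<Rightarrow> 'r::comm_ring_1" where
  "gM y x = (if x = SR () then
     (if y = (SR (), SR ()) then 1 else if y = (SC (), SCs ()) then -1
      else if y = (SCs (), SC ()) then 1 else 0) else 0)"

definition KM :: "ub \<times> ub \<Rightarrow> ub \<times> ub \<Rightarrow> 'r::comm_ring_1" where
  "KM y x =
    (if y = (SC (), SC ()) \<and> x = (SR (), SC ()) then -1
     else if y = (SC (), SCs ()) \<and> x = (SR (), SCs ()) then -1
     else if y = (SC (), SR ()) \<and> x = (SC (), SCs ()) then 1
     else if y = (SC (), SR ()) \<and> x = (SCs (), SC ()) then 1
     else if y = (SCs (), SC ()) \<and> x = (SR (), SCs ()) then 1
     else if y = (SCs (), SR ()) \<and> x = (SCs (), SCs ()) then -1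
     else 0)"


lemma sum_ub: "(\<Sum>x\<in>(UNIV::ub set). f x) = f (SC ()) + f (SCs ()) + f (SR ())"
  unfolding ub_univ by (simp add: algebra_simps)

lemma sum9: "(\<Sum>x\<in>(UNIV::(ub \<times> ub) set). f x) =
   (f (SC (), SC ()) + f (SC (), SCs ()) + f (SC (), SR ())) +
   (f (SCs (), SC ()) + f (SCs (), SCs ()) + f (SCs (), SR ())) +
   (f (SR (), SC ()) + f (SR (), SCs ()) + f (SR (), SR ()))"
proof -
  have "(\<Sum>x\<in>(UNIV::(ub \<times> ub) set). f x) = (\<Sum>a\<in>(UNIV::ub set). \<Sum>b\<in>(UNIV::ub set). f (a, b))"
    by (simp add: sum.cartesian_product flip: UNIV_Times_UNIV)
  then show ?thesis by (simp add: sum_ub)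
qed


lemmas S = basT degT difT chiT basZ difZ chiZ degZ sum9 sdeg_def epsn_def
  fM_def gM_def KM_def mmul_def idm_def

lemmas E = s_morphism_def gmap_def fun_eq_iff split_paired_All all_ub




lemma t1: "gmap (tensor (O_pos :: (ub, 'r::comm_ring_1) cx) O_neg) O_zero 0 fM"
    unfolding E by (simp add: S)
lemma m1: "s_morphism (tensor (O_pos :: (ub, 'r::comm_ring_1) cx) O_neg) O_zero fM"
    unfolding E by (simp add: S)

lemma m2: "s_morphism (O_zero :: (ub, 'r::comm_ring_1) cx) (tensor O_pos O_neg) gM"
    unfolding E by (simp add: S)
lemma h2: "s_homotopic (O_zero :: (ub, 'r::comm_ring_1) cx) O_zero (mmul (bas (tensor (O_pos :: (ub, 'r) cx) O_neg)) fM gM) (idm O_zero)"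
    unfolding s_homotopic_def
    by (rule exI[of _ "\<lambda>_ _. 0"]) (unfold E, simp add: S)
lemma h1: "s_homotopic (tensor (O_pos :: (ub, 'r::comm_ring_1) cx) O_neg) (tensor O_pos O_neg) (mmul (bas (O_zero :: (ub, 'r) cx)) gM fM) (idm (tensor O_pos O_neg))"
    unfolding s_homotopic_def
    by (rule exI[of _ KM]) (unfold E, simp add: S)

theorem lemma2p7:
  shows "s_heq (tensor (O_pos :: ((unit, unit) sb, 'r::comm_ring_1) cx) O_neg) (O_zero :: ((unit, unit) sb, 'r) cx)"
  unfolding s_heq_def using m1 m2 h1 h2 by blast

end
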